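(* Let $k\geqslant 1$ be an integer. For $l=(l_1,\ldots,l_k)\in(\mathbb R_{>0})^k$, let $S_l$ be the nondecreasing sequence obtained by taking the union (with multiplicity) of the $k$ sequences $T_i=\{d/l_i\}_{d=1}^\infty$, $i=1,\ldots,k$, and reordering the entries in nondecreasing order; write $S_l[d]$ for the $d$-th entry of $S_l$ (indexing from $1$), and $|l|=l_1+\ldots+l_k$. Then for every $d\in\mathbb N=\{1,2,\ldots\}$, $$\sup_{l\in(\mathbb R_{>0})^k}|l|\,S_l[d]=d+k-1.$$ *)

theory Defs
  imports "HOL-Analysis.Analysis"
begin

text \<open>The entries of the k sequences T_i = (d / l_i)_{d \<ge> 1}, i < k, indexed by pairs (i, m)
  with i < k and m \<ge> 1 (indices i are 0-based here).  A sequence s (0-indexed, so s j is the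
  (j+1)-th entry) is a nondecreasing reordering of their union with multiplicity if s is
  monotone and there is a bijection from the positions onto the index pairs.\<close>

definition is_sorted_merge :: "nat \<Rightarrow> (nat \<Rightarrow> real) \<Rightarrow> (nat \<Rightarrow> real) \<Rightarrow> bool" where
  "is_sorted_merge k l s \<longleftrightarrow> mono s \<and>
     (\<exists>\<sigma>. bij_betw \<sigma> (UNIV :: nat set) ({..<k} \<times> {1..}) \<and>
          (\<forall>j. s j = real (snd (\<sigma> j)) / l (fst (\<sigma> j))))"

definition S_entry :: "nat \<Rightarrow> (nat \<Rightarrow> real) \<Rightarrow> nat \<Rightarrow> real" where
  "S_entry k l d = (THE s. is_sorted_merge k l s) (d - 1)"

end

theory Submission
  imports Defs
begin

abbreviation vv :: "(nat \<Rightarrow> real) \<Rightarrow> nat \<times> nat \<Rightarrow> real" where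
  "vv l p \<equiv> real (snd p) / l (fst p)"

abbreviation II :: "nat \<Rightarrow> (nat \<times> nat) set" where
  "II k \<equiv> {..<k} \<times> {1..}"

lemma fin_le:
  assumes pos: "\<forall>i<k. l i > 0"
  shows "finite {p \<in> II k. vv l p \<le> v}"
proof -
  define B where "B = nat \<lceil>\<bar>v\<bar> * (\<Sum>i<k. l i)\<rceil>"
  have "{p \<in> II k. vv l p \<le> v} \<subseteq> {..<k} \<times> {..B}"
  proof
    fix p assume "p \<in> {p \<in> II k. vv l p \<le> v}"
    then obtain i m where p: "p = (i,m)" and im: "i<k" "1 \<le> m" "real m / l i \<le> v"
      by (cases p) auto
    then have li: "l i > 0" using pos by auto
    have lsum: "l i \<le> (\<Sum>i<k. l i)"
      using member_le_sum[of i "{..<k}" l] im pos by (auto intro: less_imp_le)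
    have "real m \<le> v * l i" using im li by (simp add: pos_divide_le_eq)
    also have "\<dots> \<le> \<bar>v\<bar> * l i" using li by (simp add: mult_right_mono)
    also have "\<dots> \<le> \<bar>v\<bar> * (\<Sum>i<k. l i)"
      using mult_left_mono[OF lsum, of "\<bar>v\<bar>"] by simp
    finally have "m \<le> B" unfolding B_def by linarith
    then show "p \<in> {..<k} \<times> {..B}" using p im by simp
  qed
  thus ?thesis by (rule finite_subset) auto
qed

lemma fin_less:
  assumes pos: "\<forall>i<k. l i > 0"
  shows "finite {p \<in> II k. vv l p < v}"
  by (rule finite_subset[OF _ fin_le[OF pos, of v]]) auto

lemma sm_le:
  assumes sm: "is_sorted_merge k l s" and pos: "\<forall>i<k. l i > 0"
  shows "s j \<le> x \<longleftrightarrow> j < card {p \<in> II k. vv l p \<le> x}"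
proof -
  obtain \<sigma> where bij: "bij_betw \<sigma> UNIV (II k)" and sv: "\<forall>j. s j = vv l (\<sigma> j)"
    and mono: "mono s" using sm unfolding is_sorted_merge_def by blast
  define D where "D = {j. s j \<le> x}"
  have im: "\<sigma> ` D = {p \<in> II k. vv l p \<le> x}"
  proof
    have mem: "\<And>j. \<sigma> j \<in> II k" using bij_betwE[OF bij] by blast
    show "\<sigma> ` D \<subseteq> {p \<in> II k. vv l p \<le> x}"
    proof (rule image_subsetI)
      fix j assume "j \<in> D"
      then have "vv l (\<sigma> j) \<le> x" using sv unfolding D_def by simp
      with mem[of j] show "\<sigma> j \<in> {p \<in> II k. vv l p \<le> x}" by blast
    qed
    show "{p \<in> II k. vv l p \<le> x} \<subseteq> \<sigma> ` D"
    proof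
      fix p assume p: "p \<in> {p \<in> II k. vv l p \<le> x}"
      then obtain j where "p = \<sigma> j" using bij_betw_imp_surj_on[OF bij] by blast
      then show "p \<in> \<sigma> ` D" using p sv unfolding D_def by auto
    qed
  qed
  have inj: "inj_on \<sigma> D" using bij bij_betw_imp_inj_on inj_on_subset by blast
  have card: "card D = card {p \<in> II k. vv l p \<le> x}" using im inj card_image by fastforce
  have finD: "finite D" using finite_imageD[of \<sigma> D] im inj fin_le[OF pos] by simp
  show ?thesis
  proof
    assume "s j \<le> x"
    then have "{..j} \<subseteq> D" unfolding D_def using mono by (auto dest: monoD)
    then have "card {..j} \<le> card D" using finD by (rule card_mono[rotated])
    then show "j < card {p \<in> II k. vv l p \<le> x}" using card by simp
  next
    assume a: "j < card {p \<in> II k. vv l p \<le> x}"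
    show "s j \<le> x"
    proof (rule ccontr)
      assume "\<not> s j \<le> x"
      then have "D \<subseteq> {..<j}" unfolding D_def using mono
        by (auto dest: monoD[of s j] simp: not_less)
      then have "card D \<le> j" using card_mono[of "{..<j}" D] by simp
      then show False using a card by simp
    qed
  qed
qed

lemma sm_less:
  assumes sm: "is_sorted_merge k l s" and pos: "\<forall>i<k. l i > 0"
  shows "s j < x \<longleftrightarrow> j < card {p \<in> II k. vv l p < x}"
proof -
  obtain \<sigma> where bij: "bij_betw \<sigma> UNIV (II k)" and sv: "\<forall>j. s j = vv l (\<sigma> j)"
    and mono: "mono s" using sm unfolding is_sorted_merge_def by blast
  define D where "D = {j. s j < x}"
  have im: "\<sigma> ` D = {p \<in> II k. vv l p < x}"
  proof
    have mem: "\<And>j. \<sigma> j \<in> II k" using bij_betwE[OF bij] by blast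
    show "\<sigma> ` D \<subseteq> {p \<in> II k. vv l p < x}"
    proof (rule image_subsetI)
      fix j assume "j \<in> D"
      then have "vv l (\<sigma> j) < x" using sv unfolding D_def by simp
      with mem[of j] show "\<sigma> j \<in> {p \<in> II k. vv l p < x}" by blast
    qed
    show "{p \<in> II k. vv l p < x} \<subseteq> \<sigma> ` D"
    proof
      fix p assume p: "p \<in> {p \<in> II k. vv l p < x}"
      then obtain j where "p = \<sigma> j" using bij_betw_imp_surj_on[OF bij] by blast
      then show "p \<in> \<sigma> ` D" using p sv unfolding D_def by auto
    qed
  qed
  have inj: "inj_on \<sigma> D" using bij bij_betw_imp_inj_on inj_on_subset by blast
  have card: "card D = card {p \<in> II k. vv l p < x}" using im inj card_image by fastforce
  have finD: "finite D" using finite_imageD[of \<sigma> D] im inj fin_less[OF pos] by simp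
  show ?thesis
  proof
    assume "s j < x"
    then have "{..j} \<subseteq> D" unfolding D_def using mono by (auto dest: monoD)
    then have "card {..j} \<le> card D" using finD by (rule card_mono[rotated])
    then show "j < card {p \<in> II k. vv l p < x}" using card by simp
  next
    assume a: "j < card {p \<in> II k. vv l p < x}"
    show "s j < x"
    proof (rule ccontr)
      assume "\<not> s j < x"
      then have "D \<subseteq> {..<j}" unfolding D_def using mono
        by (auto dest: monoD[of s j] simp: not_less)
      then have "card D \<le> j" using card_mono[of "{..<j}" D] by simp
      then show False using a card by simp
    qed
  qed
qed

lemma exists_sm:
  assumes k: "k \<ge> 1" and pos: "\<forall>i<k. l i > 0"
  shows "\<exists>s. is_sorted_merge k l s"
proof -
  define lt where "lt p q \<longleftrightarrow> vv l p < vv l q \<or> (vv l p = vv l q \<and>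
     (fst p < fst q \<or> (fst p = fst q \<and> snd p < snd q)))" for p q :: "nat \<times> nat"
  define P where "P p = {q \<in> II k. lt q p}" for p
  define r where "r p = card (P p)" for p
  have trans: "lt a c" if "lt a b" "lt b c" for a b c
    using that unfolding lt_def by auto
  have irr: "\<not> lt p p" for p unfolding lt_def by auto
  have tot: "lt p q \<or> lt q p" if "p \<noteq> q" for p q
    using that unfolding lt_def by (auto simp: prod_eq_iff)
  have finP: "finite (P p)" for p
    by (rule finite_subset[OF _ fin_le[OF pos, of "vv l p"]]) (auto simp: P_def lt_def)
  have rlt: "r q < r p" if "lt q p" "q \<in> II k" for p q
  proof -
    have "P q \<subseteq> P p" unfolding P_def using trans[OF _ that(1)] by auto
    moreover have "q \<in> P p" "q \<notin> P q" unfolding P_def using that irr by auto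
    ultimately have "P q \<subset> P p" by blast
    then show ?thesis unfolding r_def using finP psubset_card_mono by blast
  qed
  have inj: "inj_on r (II k)"
  proof (rule inj_onI)
    fix p q assume "p \<in> II k" "q \<in> II k" "r p = r q"
    then show "p = q" using tot[of p q] rlt[of p q] rlt[of q p] by (cases "p = q") auto
  qed
  have infI: "infinite (II k)"
  proof
    assume fin: "finite (II k)"
    have sub: "{0::nat} \<times> {1::nat..} \<subseteq> II k" using k by auto
    have "finite ({0::nat} \<times> {1::nat..})" by (rule finite_subset[OF sub fin])
    then have "finite (snd ` ({0::nat} \<times> {1::nat..}))" by (rule finite_imageI)
    moreover have "snd ` ({0::nat} \<times> {1::nat..}) = {1..}" by force
    ultimately show False using infinite_Ici[of "1::nat"] by simp
  qed
  have surj: "r ` II k = UNIV"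
  proof (rule set_eqI, rule iffI)
    fix n :: nat assume "n \<in> UNIV"
    have "infinite (r ` II k)" using infI finite_imageD[OF _ inj] by metis
    then have "\<exists>m\<ge>n. m \<in> r ` II k" unfolding infinite_nat_iff_unbounded_le by simp
    then obtain p where p: "p \<in> II k" "n \<le> r p" by force
    show "n \<in> r ` II k"
    proof (cases "r p = n")
      case True then show ?thesis using p by blast
    next
      case False
      then have nl: "n < r p" using p by simp
      have sub: "r ` P p \<subseteq> {..<r p}"
      proof (rule image_subsetI)
        fix q assume "q \<in> P p"
        then show "r q \<in> {..<r p}" using rlt[of q p] unfolding P_def by simp
      qed
      have injP: "inj_on r (P p)" using inj_on_subset[OF inj] unfolding P_def by auto
      have "card (r ` P p) = card {..<r p}"
        using card_image[OF injP] unfolding r_def by simp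
      then have "r ` P p = {..<r p}" using card_subset_eq[OF _ sub] by simp
      then have "n \<in> r ` P p" using nl by simp
      then obtain q where "q \<in> P p" "n = r q" by force
      then show ?thesis unfolding P_def by force
    qed
  qed simp
  have bijr: "bij_betw r (II k) UNIV" using inj surj by (simp add: bij_betw_def)
  define \<sigma> where "\<sigma> = inv_into (II k) r"
  have bijs: "bij_betw \<sigma> UNIV (II k)" unfolding \<sigma>_def by (rule bij_betw_inv_into[OF bijr])
  have rs: "r (\<sigma> j) = j" for j unfolding \<sigma>_def using surj by (simp add: f_inv_into_f)
  have mem: "\<sigma> j \<in> II k" for j using bij_betwE[OF bijs] by blast
  define s where "s j = vv l (\<sigma> j)" for j
  have "mono s"
  proof (rule monoI, rule ccontr)
    fix j j' :: nat assume jj: "j \<le> j'" "\<not> s j \<le> s j'"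
    then have "lt (\<sigma> j') (\<sigma> j)" unfolding s_def lt_def by auto
    then have "r (\<sigma> j') < r (\<sigma> j)" using rlt mem by blast
    then show False using rs jj by simp
  qed
  then have "is_sorted_merge k l s" unfolding is_sorted_merge_def using bijs s_def by blast
  then show ?thesis by blast
qed

lemma unique_sm:
  assumes pos: "\<forall>i<k. l i > 0" and "is_sorted_merge k l s" "is_sorted_merge k l s'"
  shows "s = s'"
proof
  fix j
  have "s j \<le> s' j" using sm_le[OF assms(2) pos] sm_le[OF assms(3) pos] by blast
  moreover have "s' j \<le> s j" using sm_le[OF assms(2) pos] sm_le[OF assms(3) pos] by blast
  ultimately show "s j = s' j" by simp
qed

lemma the_sm:
  assumes k: "k \<ge> 1" and pos: "\<forall>i<k. l i > 0"
  shows "is_sorted_merge k l (THE s. is_sorted_merge k l s)"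
  using exists_sm[OF k pos] unique_sm[OF pos] by (metis theI)

lemma nat_ceil_minus:
  assumes "x > 0"
  shows "x - 1 \<le> real (nat \<lceil>x\<rceil> - 1)"
proof -
  have "1 \<le> nat \<lceil>x\<rceil>" using assms by linarith
  then have "real (nat \<lceil>x\<rceil> - 1) = real (nat \<lceil>x\<rceil>) - 1" by (simp add: of_nat_diff)
  moreover have "real (nat \<lceil>x\<rceil>) \<ge> x" by linarith
  ultimately show ?thesis by linarith
qed

lemma upper:
  assumes k: "k \<ge> 1" and d: "d \<ge> 1" and pos: "\<forall>i<k. l i > 0"
  shows "(\<Sum>i<k. l i) * S_entry k l d \<le> real d + real k - 1"
proof -
  define s where "s = (THE s. is_sorted_merge k l s)"
  have sm: "is_sorted_merge k l s" unfolding s_def by (rule the_sm[OF k pos])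
  define t where "t = s (d-1)"
  have St: "S_entry k l d = t" by (simp add: S_entry_def s_def t_def)
  obtain \<sigma> where bij: "bij_betw \<sigma> UNIV (II k)" and sv: "\<forall>j. s j = vv l (\<sigma> j)"
    using sm unfolding is_sorted_merge_def by blast
  have "\<sigma> (d-1) \<in> II k" using bij_betwE[OF bij] by blast
  then obtain i m where im: "\<sigma> (d-1) = (i,m)" "i < k" "1 \<le> m" by (cases "\<sigma> (d-1)") auto
  have tpos: "t > 0" using sv im pos unfolding t_def by simp
  have "\<not> s (d-1) < t" unfolding t_def by simp
  then have c: "card {p \<in> II k. vv l p < t} \<le> d - 1" using sm_less[OF sm pos] by simp
  define A where "A = Sigma {..<k} (\<lambda>i. {1..<nat \<lceil>t * l i\<rceil>})"
  have "A \<subseteq> {p \<in> II k. vv l p < t}"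
  proof
    fix p assume "p \<in> A"
    then obtain i m where p: "p = (i,m)" "i < k" "1 \<le> m" "m < nat \<lceil>t * l i\<rceil>"
      unfolding A_def by auto
    have li: "l i > 0" using pos p by auto
    have "real m < t * l i" using p(4) by linarith
    then have "real m / l i < t" using li by (simp add: pos_divide_less_eq)
    then show "p \<in> {p \<in> II k. vv l p < t}" using p by simp
  qed
  then have "card A \<le> d - 1" using c card_mono[OF fin_less[OF pos]] le_trans by blast
  moreover have "card A = (\<Sum>i<k. nat \<lceil>t * l i\<rceil> - 1)" unfolding A_def by simp
  ultimately have "(\<Sum>i<k. nat \<lceil>t * l i\<rceil> - 1) \<le> d - 1" by simp
  then have "real (\<Sum>i<k. nat \<lceil>t * l i\<rceil> - 1) \<le> real (d - 1)" by (rule of_nat_mono)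
  then have "real (\<Sum>i<k. nat \<lceil>t * l i\<rceil> - 1) \<le> real d - 1" using d by (simp add: of_nat_diff)
  moreover have "(\<Sum>i<k. t * l i - 1) \<le> real (\<Sum>i<k. nat \<lceil>t * l i\<rceil> - 1)"
    unfolding of_nat_sum
  proof (rule sum_mono)
    fix i assume "i \<in> {..<k}"
    then have "t * l i > 0" using pos tpos by simp
    then show "t * l i - 1 \<le> real (nat \<lceil>t * l i\<rceil> - 1)" by (rule nat_ceil_minus)
  qed
  moreover have "(\<Sum>i<k. t * l i - 1) = t * (\<Sum>i<k. l i) - real k"
    by (simp add: sum_subtractf sum_distrib_left)
  ultimately show ?thesis using St by (simp add: mult.commute)
qed

lemma attain:
  assumes k: "k \<ge> 1" and d: "d \<ge> 1"
  defines "l0 \<equiv> (\<lambda>i::nat. if i = 0 then real d else 1)"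
  shows "(\<Sum>i<k. l0 i) * S_entry k l0 d = real d + real k - 1"
proof -
  have pos: "\<forall>i<k. l0 i > 0" using d unfolding l0_def by auto
  define s where "s = (THE s. is_sorted_merge k l0 s)"
  have sm: "is_sorted_merge k l0 s" unfolding s_def by (rule the_sm[OF k pos])
  have St: "S_entry k l0 d = s (d-1)" by (simp add: S_entry_def s_def)
  have e1: "{p \<in> II k. vv l0 p < 1} = {0} \<times> {1..<d}"
  proof (rule set_eqI)
    fix p :: "nat \<times> nat"
    obtain i m where p: "p = (i,m)" by (cases p)
    show "p \<in> {p \<in> II k. vv l0 p < 1} \<longleftrightarrow> p \<in> {0} \<times> {1..<d}"
      using d k unfolding p l0_def by auto
  qed
  have "\<not> s (d-1) < 1" using sm_less[OF sm pos, of "d-1" 1] e1 by simp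
  moreover have "s (d-1) \<le> 1"
  proof -
    have sub: "{0} \<times> {1..d} \<subseteq> {p \<in> II k. vv l0 p \<le> 1}" using d k unfolding l0_def by auto
    have "card ({0::nat} \<times> {1..d}) \<le> card {p \<in> II k. vv l0 p \<le> 1}"
      by (rule card_mono[OF fin_le[OF pos] sub])
    then have "d - 1 < card {p \<in> II k. vv l0 p \<le> 1}" using d by simp
    then show ?thesis using sm_le[OF sm pos] by blast
  qed
  ultimately have s1: "S_entry k l0 d = 1" using St by simp
  obtain k' where k': "k = Suc k'" using k by (cases k) auto
  have "(\<Sum>i<k. l0 i) = real d + real k'"
    unfolding k' sum.lessThan_Suc_shift by (simp add: l0_def)
  then show ?thesis using s1 k' by simp
qed

theorem proposition5:
  fixes k d :: nat
  assumes "k \<ge> 1" and "d \<ge> 1"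
  shows "(SUP l\<in>{l :: nat \<Rightarrow> real. \<forall>i<k. l i > 0}.
            ereal ((\<Sum>i<k. l i) * S_entry k l d)) = ereal (real d + real k - 1)"
proof (rule antisym)
  show "(SUP l\<in>{l :: nat \<Rightarrow> real. \<forall>i<k. l i > 0}.
            ereal ((\<Sum>i<k. l i) * S_entry k l d)) \<le> ereal (real d + real k - 1)"
    by (rule SUP_least) (use upper[OF assms] in auto)
  define l0 where "l0 = (\<lambda>i::nat. if i = 0 then real d else 1)"
  have "l0 \<in> {l :: nat \<Rightarrow> real. \<forall>i<k. l i > 0}" using assms unfolding l0_def by auto
  then show "ereal (real d + real k - 1) \<le> (SUP l\<in>{l :: nat \<Rightarrow> real. \<forall>i<k. l i > 0}.
            ereal ((\<Sum>i<k. l i) * S_entry k l d))"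
    using attain[OF assms] unfolding l0_def[symmetric] by (intro SUP_upper2) auto
qed

end
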